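(* Let $k\ge1$ be an integer. The set $N^{(-)}_k=\{s\in S(\theta): \lfloor k\theta\rfloor\le s\le k\theta\}$ is invariant under $s\mapsto \lfloor k\theta\rfloor+k\theta-s$, and the set $N^{(+)}_k=\{s\in S(\theta): \lfloor k/\theta\rfloor\theta\le s\le k\}$ is invariant under $s\mapsto \lfloor k/\theta\rfloor\theta+k-s$. Consequently, listing the elements of either set in increasing order, the sequence of consecutive differences is a palindrome.
   Context: Fix an irrational $\theta$ with $1<\theta<2$ and let $S(\theta)=\{i+j\theta : i,j\in\mathbb{N}_0\}$. *)

theory Defs
  imports Complex_Main
begin

definition S :: "real \<Rightarrow> real set" where
  "S \<theta> = {real i + real j * \<theta> | i j :: nat. True}"

definition Nminus :: "real \<Rightarrow> nat \<Rightarrow> real set" where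
  "Nminus \<theta> k = {s \<in> S \<theta>. real_of_int \<lfloor>real k * \<theta>\<rfloor> \<le> s \<and> s \<le> real k * \<theta>}"

definition Nplus :: "real \<Rightarrow> nat \<Rightarrow> real set" where
  "Nplus \<theta> k = {s \<in> S \<theta>. real_of_int \<lfloor>real k / \<theta>\<rfloor> * \<theta> \<le> s \<and> s \<le> real k}"

definition gaps :: "real list \<Rightarrow> real list" where
  "gaps xs = map (\<lambda>(a, b). b - a) (zip xs (tl xs))"

end

theory Submission
  imports Defs
begin

lemma gaps_length: "length (gaps xs) = length xs - 1"
  by (simp add: gaps_def)

lemma gaps_nth: "i < length xs - 1 \<Longrightarrow> gaps xs ! i = xs ! Suc i - xs ! i"
  by (simp add: gaps_def nth_tl)

lemma palin:
  fixes A :: "real set"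
  assumes fin: "finite A" and inv: "(\<lambda>s. c - s) ` A = A"
  shows "rev (gaps (sorted_list_of_set A)) = gaps (sorted_list_of_set A)"
proof -
  define xs where "xs = sorted_list_of_set A"
  have s: "sorted_wrt (<) xs" "set xs = A" "length xs = card A"
    using fin by (auto simp: xs_def)
  have "sorted_wrt (<) (map (\<lambda>s. c - s) (rev xs))"
    using s(1) by (simp add: sorted_wrt_map sorted_wrt_rev)
  moreover have "set (map (\<lambda>s. c - s) (rev xs)) = A" using s inv by simp
  moreover have "length (map (\<lambda>s. c - s) (rev xs)) = card A" using s by simp
  ultimately have "sorted_list_of_set A = map (\<lambda>s. c - s) (rev xs)"
    using sorted_list_of_set_unique[OF fin] by (metis list.map_id)
  hence eq: "xs = map (\<lambda>s. c - s) (rev xs)" by (simp add: xs_def)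
  have nx: "\<And>j. j < length xs \<Longrightarrow> xs ! j = c - xs ! (length xs - 1 - j)"
  proof -
    fix j assume "j < length xs"
    hence "xs ! j = (map (\<lambda>s. c - s) (rev xs)) ! j" using eq by metis
    thus "xs ! j = c - xs ! (length xs - 1 - j)" using \<open>j < length xs\<close> by (simp add: rev_nth)
  qed
  have "rev (gaps xs) = gaps xs"
  proof (rule nth_equalityI)
    show "length (rev (gaps xs)) = length (gaps xs)" by simp
    fix i assume "i < length (rev (gaps xs))"
    hence i: "i < length xs - 1" by (simp add: gaps_length)
    have "rev (gaps xs) ! i = gaps xs ! (length xs - 2 - i)"
      using i by (simp add: rev_nth gaps_length)
    also have "\<dots> = xs ! (length xs - 1 - i) - xs ! (length xs - 2 - i)"
      using i by (simp add: gaps_nth Suc_diff_Suc numeral_2_eq_2)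
    also have "\<dots> = (c - xs ! i) - (c - xs ! Suc i)"
      using i nx[of i] nx[of "Suc i"] by (simp add: numeral_2_eq_2)
    also have "\<dots> = gaps xs ! i" using i by (simp add: gaps_nth)
    finally show "rev (gaps xs) ! i = gaps xs ! i" .
  qed
  thus ?thesis by (simp add: xs_def)
qed

lemma inv_image:
  assumes "\<And>s. s \<in> A \<Longrightarrow> c - s \<in> A"
  shows "(\<lambda>s. c - s) ` A = (A :: real set)"
proof
  show "(\<lambda>s. c - s) ` A \<subseteq> A" using assms by auto
  show "A \<subseteq> (\<lambda>s. c - s) ` A"
  proof
    fix s assume "s \<in> A"
    hence "c - s \<in> A" using assms by auto
    moreover have "s = c - (c - s)" by simp
    ultimately show "s \<in> (\<lambda>s. c - s) ` A" by blast
  qed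
qed

lemma fin_S:
  assumes "0 < \<theta>"
  shows "finite {s \<in> S \<theta>. s \<le> B}"
proof -
  obtain K :: nat where K: "B \<le> real K" "B / \<theta> \<le> real K"
    by (metis max.bounded_iff real_arch_simple)
  have "{s \<in> S \<theta>. s \<le> B} \<subseteq> (\<lambda>(i,j). real i + real j * \<theta>) ` ({..K} \<times> {..K})"
  proof
    fix s assume "s \<in> {s \<in> S \<theta>. s \<le> B}"
    then obtain i j :: nat where s: "s = real i + real j * \<theta>" "s \<le> B" by (auto simp: S_def)
    have "real i \<le> B" using s assms by (smt (verit) mult_nonneg_nonneg of_nat_0_le_iff)
    hence "i \<le> K" using K by linarith
    have "real j * \<theta> \<le> B" using s by simp
    hence "real j \<le> B / \<theta>" using assms by (simp add: pos_le_divide_eq)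
    hence "j \<le> K" using K by linarith
    thus "s \<in> (\<lambda>(i,j). real i + real j * \<theta>) ` ({..K} \<times> {..K})"
      using s \<open>i \<le> K\<close> by force
  qed
  thus ?thesis by (rule finite_subset) simp
qed

theorem lemma9:
  fixes \<theta> :: real and k :: nat
  assumes "\<theta> \<notin> \<rat>" and "1 < \<theta>" and "\<theta> < 2" and "1 \<le> k"
  shows "(\<lambda>s. real_of_int \<lfloor>real k * \<theta>\<rfloor> + real k * \<theta> - s) ` Nminus \<theta> k = Nminus \<theta> k
     \<and> (\<lambda>s. real_of_int \<lfloor>real k / \<theta>\<rfloor> * \<theta> + real k - s) ` Nplus \<theta> k = Nplus \<theta> k
     \<and> finite (Nminus \<theta> k) \<and> rev (gaps (sorted_list_of_set (Nminus \<theta> k))) = gaps (sorted_list_of_set (Nminus \<theta> k))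
     \<and> finite (Nplus \<theta> k) \<and> rev (gaps (sorted_list_of_set (Nplus \<theta> k))) = gaps (sorted_list_of_set (Nplus \<theta> k))"
proof -
  have th: "0 < \<theta>" using assms by simp
  define m where "m = \<lfloor>real k * \<theta>\<rfloor>"
  define p where "p = \<lfloor>real k / \<theta>\<rfloor>"
  have m0: "0 \<le> m" using th unfolding m_def by simp
  have p0: "0 \<le> p" using th unfolding p_def by simp
  have A: "(\<lambda>s. real_of_int m + real k * \<theta> - s) ` Nminus \<theta> k = Nminus \<theta> k"
  proof (rule inv_image)
    fix s assume "s \<in> Nminus \<theta> k"
    then obtain i j :: nat where s: "s = real i + real j * \<theta>"
      "real_of_int m \<le> s" "s \<le> real k * \<theta>"
      by (auto simp: Nminus_def S_def m_def)
    have "real j * \<theta> \<le> real k * \<theta>" using s by simp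
    hence jk: "j \<le> k" using th by simp
    have "real i \<le> real k * \<theta>" using s th by (smt (verit) mult_nonneg_nonneg of_nat_0_le_iff)
    hence "int i \<le> m" unfolding m_def by (simp add: le_floor_iff)
    then obtain i' :: nat where i': "m = int i + int i'" by (metis zle_iff_zadd)
    have "real_of_int m + real k * \<theta> - s = real i' + real (k - j) * \<theta>"
      using i' s jk by (simp add: of_nat_diff algebra_simps)
    hence "real_of_int m + real k * \<theta> - s \<in> S \<theta>" by (auto simp: S_def)
    thus "real_of_int m + real k * \<theta> - s \<in> Nminus \<theta> k"
      using s by (auto simp: Nminus_def m_def)
  qed
  have B: "(\<lambda>s. real_of_int p * \<theta> + real k - s) ` Nplus \<theta> k = Nplus \<theta> k"
  proof (rule inv_image)
    fix s assume "s \<in> Nplus \<theta> k"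
    then obtain i j :: nat where s: "s = real i + real j * \<theta>"
      "real_of_int p * \<theta> \<le> s" "s \<le> real k"
      by (auto simp: Nplus_def S_def p_def)
    have "real i \<le> real k" using s th by (smt (verit) mult_nonneg_nonneg of_nat_0_le_iff)
    hence ik: "i \<le> k" by simp
    have "real j * \<theta> \<le> real k" using s by simp
    hence "real j \<le> real k / \<theta>" using th by (simp add: pos_le_divide_eq)
    hence "int j \<le> p" unfolding p_def by (simp add: le_floor_iff)
    then obtain j' :: nat where j': "p = int j + int j'" by (metis zle_iff_zadd)
    have "real_of_int p * \<theta> + real k - s = real (k - i) + real j' * \<theta>"
      using j' s ik by (simp add: of_nat_diff algebra_simps)
    hence "real_of_int p * \<theta> + real k - s \<in> S \<theta>" by (auto simp: S_def)
    thus "real_of_int p * \<theta> + real k - s \<in> Nplus \<theta> k"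
      using s by (auto simp: Nplus_def p_def)
  qed
  have F1: "finite (Nminus \<theta> k)"
    by (rule finite_subset[OF _ fin_S[OF th, of "real k * \<theta>"]]) (auto simp: Nminus_def)
  have F2: "finite (Nplus \<theta> k)"
    by (rule finite_subset[OF _ fin_S[OF th, of "real k"]]) (auto simp: Nplus_def)
  have A': "(\<lambda>s. (real_of_int m + real k * \<theta>) - s) ` Nminus \<theta> k = Nminus \<theta> k" using A .
  have B': "(\<lambda>s. (real_of_int p * \<theta> + real k) - s) ` Nplus \<theta> k = Nplus \<theta> k" using B .
  show ?thesis
    using A B F1 F2 palin[OF F1 A'] palin[OF F2 B'] unfolding m_def p_def by simp
qed

end
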